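(* Let $n\ge 2$ be an integer, $a>0$, and let $a_0,\dots,a_{n-1}:((-a,a)\setminus\{0\})\times\mathbb{K}\to\mathbb{K}$ be arbitrary functions, where $\mathbb{K}=\mathbb{R}$ or $\mathbb{C}$. Let $f\in C^\infty(-a,a)$ be a solution of $$f^{(n)}(x)+a_{n-1}(x,f(x))f^{(n-1)}(x)+\cdots+a_0(x,f(x))f(x)=0,\qquad x\in(-a,a)\setminus\{0\},$$ such that $$|a_k(x,f(x))|=O\!\left(\frac{1}{|x|^{n-k}}\right)\quad\text{as }x\to 0,\qquad k=0,1,\dots,n-1.$$ Define $$C_n=\max_{0\le k\le n-1}\ \limsup_{x\to 0}\,|x|^{n-k}|a_k(x,f(x))|,\qquad B_n=\sum_{k=0}^{n-1}\frac1{k!}.$$ If $f^{(k)}(0)=0$ for every integer $k$ with $0\le k\le B_nC_n+n-1$, then there exists $\delta>0$ such that $f\equiv 0$ on $[-\delta,\delta]$.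
   Context: The coefficients may be singular at $x=0$; the equation is only required to hold for $x\neq 0$. By the $O$-hypothesis, $C_n$ is a finite nonnegative number. *)

theory Defs
  imports "HOL-Analysis.Analysis" "HOL-Library.Landau_Symbols"
begin

definition Cn_const :: "nat \<Rightarrow> (nat \<Rightarrow> real \<Rightarrow> 'a::real_normed_field \<Rightarrow> 'a) \<Rightarrow> (real \<Rightarrow> 'a) \<Rightarrow> ereal" where
  "Cn_const n A f =
     Max ((\<lambda>k. Limsup (at (0::real)) (\<lambda>x. ereal (\<bar>x\<bar> ^ (n - k) * norm (A k x (f x))))) ` {..<n})"

definition Bn_const :: "nat \<Rightarrow> real" where
  "Bn_const n = (\<Sum>k<n. 1 / fact k)"

end

theory Submission
  imports Defs
begin

lemma int_bound:
  fixes h h' :: "real \<Rightarrow> 'a::real_normed_vector"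
  assumes x: "x \<noteq> 0" and h0: "h 0 = 0"
    and der: "\<And>t. \<bar>t\<bar> \<le> \<bar>x\<bar> \<Longrightarrow> (h has_vector_derivative h' t) (at t)"
    and bnd: "\<And>t. 0 < \<bar>t\<bar> \<Longrightarrow> \<bar>t\<bar> < \<bar>x\<bar> \<Longrightarrow> norm (h' t) \<le> K * \<bar>t\<bar> ^ p"
  shows "norm (h x) \<le> K * \<bar>x\<bar> ^ Suc p / Suc p"
proof (cases "x > 0")
  case True
  define \<phi> where "\<phi> t = K * t ^ Suc p / Suc p" for t :: real
  have d: "(\<phi> has_vector_derivative K * t ^ p) (at t)" for t
  proof -
    have "((\<lambda>t. K * t ^ Suc p / Suc p) has_real_derivative K * (real (Suc p) * t ^ (Suc p - Suc 0)) / Suc p) (at t)"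
      by (intro DERIV_cdivide DERIV_cmult DERIV_pow)
    then show ?thesis unfolding \<phi>_def has_real_derivative_iff_has_vector_derivative[symmetric]
      by simp
  qed
  have cf: "continuous_on {0..x} h"
  proof (rule continuous_at_imp_continuous_on, safe)
    fix y assume "y \<in> {0..x}"
    then have "\<bar>y\<bar> \<le> \<bar>x\<bar>" using True by auto
    then show "isCont h y" by (rule has_vector_derivative_continuous[OF der])
  qed
  have cp: "continuous_on {0..x} \<phi>"
    unfolding \<phi>_def by (intro continuous_intros) auto
  have "norm (h x - h 0) \<le> \<phi> x - \<phi> 0"
    apply (rule differentiable_bound_general[OF True cf cp, of h' "\<lambda>t. K * t ^ p"])
    subgoal for t using der[of t] True by auto
    subgoal for t using d by auto
    subgoal for t using bnd[of t] True by auto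
    done
  then show ?thesis using h0 True by (simp add: \<phi>_def)
next
  case False
  then have xn: "x < 0" using x by auto
  define \<phi> where "\<phi> t = - K * (- t) ^ Suc p / Suc p" for t :: real
  have d: "(\<phi> has_vector_derivative K * (-t) ^ p) (at t)" for t
  proof -
    have "((\<lambda>t. (- t) ^ Suc p) has_real_derivative (real (Suc p) * (-t) ^ (Suc p - Suc 0)) * (- 1)) (at t)"
      by (rule DERIV_chain2[OF DERIV_pow]) (auto intro!: derivative_eq_intros)
    then have "((\<lambda>t. - K * (- t) ^ Suc p / Suc p) has_real_derivative - K * ((real (Suc p) * (-t) ^ (Suc p - Suc 0)) * (- 1)) / Suc p) (at t)"
      by (intro DERIV_cdivide DERIV_cmult)
    then show ?thesis unfolding \<phi>_def has_real_derivative_iff_has_vector_derivative[symmetric]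
      by simp
  qed
  have cf: "continuous_on {x..0} h"
  proof (rule continuous_at_imp_continuous_on, safe)
    fix y assume "y \<in> {x..0}"
    then have "\<bar>y\<bar> \<le> \<bar>x\<bar>" using xn by auto
    then show "isCont h y" by (rule has_vector_derivative_continuous[OF der])
  qed
  have cp: "continuous_on {x..0} \<phi>"
    unfolding \<phi>_def by (intro continuous_intros) auto
  have "norm (h 0 - h x) \<le> \<phi> 0 - \<phi> x"
    apply (rule differentiable_bound_general[OF xn cf cp, of h' "\<lambda>t. K * (-t) ^ p"])
    subgoal for t using der[of t] xn by auto
    subgoal for t using d by auto
    subgoal for t using bnd[of t] xn by auto
    done
  then show ?thesis using h0 xn by (simp add: \<phi>_def norm_minus_commute)
qed

lemma iter_bound:
  fixes D :: "nat \<Rightarrow> real \<Rightarrow> 'a::real_normed_vector"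
  assumes deriv: "\<And>i t. \<bar>t\<bar> \<le> r \<Longrightarrow> (D i has_vector_derivative D (Suc i) t) (at t)"
    and bnd: "\<And>t. 0 < \<bar>t\<bar> \<Longrightarrow> \<bar>t\<bar> \<le> r \<Longrightarrow> norm (D p t) \<le> K * \<bar>t\<bar> ^ e"
    and zero: "\<And>i. i < p \<Longrightarrow> p - j \<le> i \<Longrightarrow> D i 0 = 0"
    and j: "j \<le> p"
  shows "0 < \<bar>t\<bar> \<Longrightarrow> \<bar>t\<bar> \<le> r \<Longrightarrow> norm (D (p - j) t) \<le> K * \<bar>t\<bar> ^ (e + j) * fact e / fact (e + j)"
  using zero j
proof (induction j arbitrary: t)
  case 0
  then show ?case using bnd[of t] by simp
next
  case (Suc j)
  have IH: "norm (D (p - j) s) \<le> K * \<bar>s\<bar> ^ (e + j) * fact e / fact (e + j)"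
    if "0 < \<bar>s\<bar>" "\<bar>s\<bar> \<le> r" for s
    using Suc.IH[OF that] Suc.prems by auto
  have sp: "Suc (p - Suc j) = p - j" using Suc.prems by auto
  have "norm (D (p - Suc j) t) \<le> (K * fact e / fact (e + j)) * \<bar>t\<bar> ^ Suc (e + j) / Suc (e + j)"
  proof (rule int_bound[where h' = "D (p - j)"])
    show "t \<noteq> 0" using Suc.prems by auto
    show "D (p - Suc j) 0 = 0" using Suc.prems by auto
    show "(D (p - Suc j) has_vector_derivative D (p - j) s) (at s)" if "\<bar>s\<bar> \<le> \<bar>t\<bar>" for s
      using deriv[of s "p - Suc j"] that Suc.prems sp by auto
    show "norm (D (p - j) s) \<le> K * fact e / fact (e + j) * \<bar>s\<bar> ^ (e + j)"
      if "0 < \<bar>s\<bar>" "\<bar>s\<bar> < \<bar>t\<bar>" for s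
      using IH[of s] that Suc.prems by (simp add: field_simps)
  qed
  also have "\<dots> = K * \<bar>t\<bar> ^ (e + Suc j) * fact e / fact (e + Suc j)"
    by (simp add: field_simps)
  finally show ?case .
qed


lemma fact_ratio_bound:
  assumes "k < n" "n \<le> m"
  shows "fact (m - n) / fact (m - k) \<le> (1::real) / (real (m - n + 1) * fact (n - Suc k))"
proof -
  have e: "m - k - (m - n + 1) = n - Suc k" and le: "m - n + 1 \<le> m - k" using assms by auto
  have "fact (m - n + 1) * fact (n - Suc k) * ((m - k) choose (m - n + 1)) = (fact (m - k) :: nat)"
    using binomial_fact_lemma[OF le] e by simp
  moreover have "(m - k) choose (m - n + 1) \<ge> 1" using le by (simp add: Suc_leI)
  ultimately have "fact (m - n + 1) * fact (n - Suc k) \<le> (fact (m - k) :: nat)"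
    by (metis mult.right_neutral mult_le_mono2)
  then have "fact (m - n + 1) * fact (n - Suc k) \<le> (fact (m - k) :: real)"
    by (metis of_nat_fact of_nat_le_iff of_nat_mult)
  moreover have "fact (m - n + 1) = (real (m - n + 1)) * fact (m - n)"
    by (metis Suc_eq_plus1 fact_Suc of_nat_Suc)
  ultimately have "real (m - n + 1) * fact (n - Suc k) * fact (m - n) \<le> (fact (m - k) :: real)"
    by (simp add: algebra_simps)
  then have le2: "real (m - n + 1) * fact (n - Suc k) * fact (m - n) \<le> fact (m - k)" .
  have pos: "real (m - n + 1) * fact (n - Suc k) > 0" by simp
  have "fact (m - n) / fact (m - k) \<le> fact (m - n) / (real (m - n + 1) * fact (n - Suc k) * fact (m - n))"
    by (rule divide_left_mono[OF le2]) (use pos in auto)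
  also have "\<dots> = 1 / (real (m - n + 1) * fact (n - Suc k))" by simp
  finally show ?thesis .
qed

theorem proposition9:
  fixes n :: nat and a :: real
    and A :: "nat \<Rightarrow> real \<Rightarrow> 'a::real_normed_field \<Rightarrow> 'a"
    and f :: "real \<Rightarrow> 'a" and D :: "nat \<Rightarrow> real \<Rightarrow> 'a"
  assumes n: "n \<ge> 2" and a: "a > 0"
    and D0: "\<And>x. x \<in> {-a<..<a} \<Longrightarrow> D 0 x = f x"
    and Dderiv: "\<And>k x. x \<in> {-a<..<a} \<Longrightarrow> (D k has_vector_derivative D (Suc k) x) (at x)"
    and ode: "\<And>x. x \<in> {-a<..<a} - {0} \<Longrightarrow> D n x + (\<Sum>k<n. A k x (f x) * D k x) = 0"
    and bigO: "\<And>k. k < n \<Longrightarrow> (\<lambda>x. norm (A k x (f x))) \<in> O[at 0](\<lambda>x. 1 / \<bar>x\<bar> ^ (n - k))"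
    and vanish: "\<And>k::nat. ereal (real k) \<le> ereal (Bn_const n) * Cn_const n A f + ereal (real n - 1) \<Longrightarrow> D k 0 = 0"
  shows "\<exists>\<delta>>0. \<delta> < a \<and> (\<forall>x\<in>{-\<delta>..\<delta>}. f x = 0)"
proof -
  define Ck where "Ck k = Limsup (at (0::real)) (\<lambda>x. ereal (\<bar>x\<bar> ^ (n - k) * norm (A k x (f x))))" for k
  have Cdef: "Cn_const n A f = Max (Ck ` {..<n})" unfolding Cn_const_def Ck_def by simp
  have Ck_fin: "Ck k < \<infinity>" if k: "k < n" for k
  proof -
    obtain c where c: "c > 0" "eventually (\<lambda>x. norm (norm (A k x (f x))) \<le> c * norm (1 / \<bar>x\<bar> ^ (n - k))) (at (0::real))"
      using bigO[OF k] by (elim landau_o.bigE)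
    have "eventually (\<lambda>x. (x::real) \<noteq> 0) (at 0)" by (simp add: eventually_at_filter)
    with c(2) have "eventually (\<lambda>x. ereal (\<bar>x\<bar> ^ (n - k) * norm (A k x (f x))) \<le> ereal c) (at 0)"
    proof eventually_elim
      case (elim x)
      have "norm (1 / \<bar>x\<bar> ^ (n - k)) = 1 / \<bar>x\<bar> ^ (n - k)" by simp
      then have "norm (A k x (f x)) \<le> c / \<bar>x\<bar> ^ (n - k)" using elim(1) by simp
      then have "\<bar>x\<bar> ^ (n - k) * norm (A k x (f x)) \<le> \<bar>x\<bar> ^ (n - k) * (c / \<bar>x\<bar> ^ (n - k))"
        by (intro mult_left_mono) auto
      then show ?case using elim by simp
    qed
    then have "Ck k \<le> ereal c" unfolding Ck_def by (rule Limsup_bounded)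
    then show ?thesis by (rule le_less_trans) simp
  qed
  have Ck_nn: "Ck k \<ge> 0" for k
    unfolding Ck_def by (rule le_Limsup) auto
  have fin: "finite (Ck ` {..<n})" "Ck ` {..<n} \<noteq> {}" using n by (auto simp: lessThan_empty_iff)
  obtain k0 where k0: "k0 < n" "Cn_const n A f = Ck k0"
    using Max_in[OF fin] Cdef by auto
  define Cr where "Cr = real_of_ereal (Cn_const n A f)"
  have CCr: "Cn_const n A f = ereal Cr" and Cr0: "Cr \<ge> 0"
    using Ck_fin[OF k0(1)] Ck_nn[of k0] k0(2) unfolding Cr_def
    by (cases "Ck k0"; auto)+
  have Ck_le: "Ck k \<le> ereal Cr" if "k < n" for k
  proof -
    have "Ck k \<le> Max (Ck ` {..<n})" by (rule Max_ge) (use fin that in auto)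
    then show ?thesis using CCr Cdef by simp
  qed
  define B where "B = Bn_const n"
  have B1: "B \<ge> 1"
  proof -
    have "B = 1 / fact 0 + (\<Sum>k\<in>{..<n}-{0}. 1 / fact k)"
      unfolding B_def Bn_const_def using n by (subst sum.remove[of _ 0]) auto
    moreover have "(\<Sum>k\<in>{..<n}-{0}. 1 / fact k) \<ge> (0::real)" by (intro sum_nonneg) auto
    ultimately show ?thesis by simp
  qed
  have vanish': "D k 0 = 0" if "real k \<le> B * Cr + real n - 1" for k
    using vanish[of k] that CCr unfolding B_def by simp
  define m where "m = nat \<lfloor>B * Cr + real n - 1\<rfloor> + 1"
  have BC0: "B * Cr \<ge> 0" using B1 Cr0 by simp
  have fl: "\<lfloor>B * Cr + real n - 1\<rfloor> \<ge> int n - 1"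
    using BC0 by (subst le_floor_iff) simp
  have nm: "n \<le> m" using fl n unfolding m_def by linarith
  have mgt: "real m > B * Cr + real n - 1" unfolding m_def using fl n by linarith
  have Dz: "D k 0 = 0" if "k < m" for k
  proof (rule vanish')
    have "int k \<le> \<lfloor>B * Cr + real n - 1\<rfloor>" using that fl n unfolding m_def by linarith
    then show "real k \<le> B * Cr + real n - 1" by linarith
  qed
  define \<epsilon> where "\<epsilon> = (real (m - n + 1) - B * Cr) / (2 * B)"
  have mn1: "real (m - n + 1) = real m - real n + 1" using nm by simp
  have eps: "\<epsilon> > 0" unfolding \<epsilon>_def using mgt B1 mn1 by (intro divide_pos_pos) auto
  define c where "c = Cr + \<epsilon>"
  have c0: "c > 0" using Cr0 eps unfolding c_def by simp
  have Bc: "B * c < real (m - n + 1)"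
  proof -
    have "B * c = B * Cr + (real (m - n + 1) - B * Cr) / 2"
      unfolding c_def \<epsilon>_def using B1 by (simp add: field_simps)
    moreover have "real (m - n + 1) - B * Cr > 0" using mgt mn1 by linarith
    ultimately show ?thesis by (simp add: field_simps)
  qed
  have ev: "eventually (\<lambda>x. \<forall>k\<in>{..<n}. \<bar>x\<bar> ^ (n - k) * norm (A k x (f x)) < c) (at (0::real))"
  proof (rule eventually_ball_finite)
    show "finite {..<n}" by simp
    show "\<forall>k\<in>{..<n}. eventually (\<lambda>x. \<bar>x\<bar> ^ (n - k) * norm (A k x (f x)) < c) (at (0::real))"
    proof
      fix k assume "k \<in> {..<n}"
      then have "Ck k < ereal c" using Ck_le[of k] eps unfolding c_def by (simp add: le_less_trans)
      then have "eventually (\<lambda>x. ereal (\<bar>x\<bar> ^ (n - k) * norm (A k x (f x))) < ereal c) (at 0)"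
        unfolding Ck_def by (rule Limsup_lessD)
      then show "eventually (\<lambda>x. \<bar>x\<bar> ^ (n - k) * norm (A k x (f x)) < c) (at (0::real))"
        by simp
    qed
  qed
  then obtain d0 where d0: "d0 > 0" "\<And>x. x \<noteq> 0 \<Longrightarrow> \<bar>x\<bar> < d0 \<Longrightarrow> \<forall>k<n. \<bar>x\<bar> ^ (n - k) * norm (A k x (f x)) < c"
    unfolding eventually_at by (auto simp: dist_real_def)
  define r where "r = min (d0 / 2) (a / 2)"
  have r: "r > 0" "r < a" "r < d0" unfolding r_def using d0 a by auto
  have deriv: "(D i has_vector_derivative D (Suc i) t) (at t)" if "\<bar>t\<bar> \<le> r" for i t
  proof (rule Dderiv)
    show "t \<in> {-a<..<a}" using that r by (auto simp: abs_le_iff)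
  qed
  have contm: "continuous_on {-r..r} (D m)"
  proof (rule continuous_at_imp_continuous_on, safe)
    fix y assume "y \<in> {-r..r}"
    then have "\<bar>y\<bar> \<le> r" by auto
    then show "isCont (D m) y" by (rule has_vector_derivative_continuous[OF deriv])
  qed
  obtain K where K: "K > 0" "\<And>y. y \<in> D m ` {-r..r} \<Longrightarrow> norm y \<le> K"
    using compact_imp_bounded[OF compact_continuous_image[OF contm compact_Icc]]
    by (auto simp: bounded_pos)
  define L0 where "L0 = K / fact (m - n)"
  have L0: "L0 \<ge> 0" using K unfolding L0_def by simp
  have base: "norm (D n t) \<le> L0 * \<bar>t\<bar> ^ (m - n)" if "0 < \<bar>t\<bar>" "\<bar>t\<bar> \<le> r" for t
  proof -
    have "norm (D (m - (m - n)) t) \<le> K * \<bar>t\<bar> ^ (0 + (m - n)) * fact 0 / fact (0 + (m - n))"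
      by (rule iter_bound[where r = r and D = D and p = m and j = "m - n" and e = 0 and K = K, OF deriv _ _ _ that]) (use K(1) K(2)[OF imageI] Dz in \<open>auto simp: abs_le_iff\<close>)
    then show ?thesis using nm unfolding L0_def by simp
  qed
  define S where "S = (\<Sum>k<n. fact (m - n) / fact (m - k) :: real)"
  have SB: "S \<le> B / real (m - n + 1)"
  proof -
    have "S \<le> (\<Sum>k<n. 1 / (real (m - n + 1) * fact (n - Suc k)))"
      unfolding S_def by (intro sum_mono fact_ratio_bound) (use nm in auto)
    also have "\<dots> = (\<Sum>k<n. 1 / fact (n - Suc k)) / real (m - n + 1)"
      by (simp add: sum_divide_distrib field_simps)
    also have "(\<Sum>k<n. 1 / fact (n - Suc k)) = B"
      unfolding B_def Bn_const_def by (rule sum.nat_diff_reindex[where g = "\<lambda>k. 1 / fact k"])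
    finally show ?thesis .
  qed
  define q where "q = c * S"
  have S0: "S \<ge> 0" unfolding S_def by (intro sum_nonneg) auto
  have q0: "q \<ge> 0" unfolding q_def using c0 S0 by simp
  have q1: "q < 1"
  proof -
    have "q \<le> c * (B / real (m - n + 1))" unfolding q_def using SB c0 by (intro mult_left_mono) auto
    also have "\<dots> = B * c / real (m - n + 1)" by simp
    also have "\<dots> < 1" using Bc by (simp add: divide_less_eq)
    finally show ?thesis .
  qed
  have step: "\<forall>t. 0 < \<bar>t\<bar> \<longrightarrow> \<bar>t\<bar> \<le> r \<longrightarrow> norm (D n t) \<le> q ^ j * L0 * \<bar>t\<bar> ^ (m - n)" for j
  proof (induction j)
    case 0
    then show ?case using base by simp
  next
    case (Suc j)
    show ?case
    proof (intro allI impI)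
      fix t :: real assume t: "0 < \<bar>t\<bar>" "\<bar>t\<bar> \<le> r"
      have Dk: "norm (D k t) \<le> q ^ j * L0 * \<bar>t\<bar> ^ (m - k) * (fact (m - n) / fact (m - k))" if k: "k < n" for k
      proof -
        have "norm (D (n - (n - k)) t) \<le> q ^ j * L0 * \<bar>t\<bar> ^ ((m - n) + (n - k)) * fact (m - n) / fact ((m - n) + (n - k))"
          by (rule iter_bound[where r = r and D = D and p = n and j = "n - k" and e = "m - n" and K = "q ^ j * L0", OF deriv _ _ _ t]) (use Suc.IH Dz nm in auto)
        moreover have "m - n + (n - k) = m - k" using k nm by simp
        ultimately show ?thesis using k by simp
      qed
      have tin: "t \<in> {-a<..<a} - {0}" using t r by auto
      have "D n t = - (\<Sum>k<n. A k t (f t) * D k t)" using ode[OF tin] by (simp add: eq_neg_iff_add_eq_0)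
      then have "norm (D n t) = norm (\<Sum>k<n. A k t (f t) * D k t)" by simp
      also have "\<dots> \<le> (\<Sum>k<n. norm (A k t (f t)) * norm (D k t))"
        by (rule order.trans[OF norm_sum]) (simp add: norm_mult)
      also have "\<dots> \<le> (\<Sum>k<n. (c / \<bar>t\<bar> ^ (n - k)) * (q ^ j * L0 * \<bar>t\<bar> ^ (m - k) * (fact (m - n) / fact (m - k))))"
      proof (rule sum_mono)
        fix k assume "k \<in> {..<n}"
        then have k: "k < n" by simp
        have "\<bar>t\<bar> ^ (n - k) * norm (A k t (f t)) < c" using d0(2)[of t] t r k by auto
        then have "norm (A k t (f t)) \<le> c / \<bar>t\<bar> ^ (n - k)" using t by (simp add: field_simps)
        then show "norm (A k t (f t)) * norm (D k t) \<le> (c / \<bar>t\<bar> ^ (n - k)) * (q ^ j * L0 * \<bar>t\<bar> ^ (m - k) * (fact (m - n) / fact (m - k)))"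
          using Dk[OF k] c0 by (intro mult_mono) auto
      qed
      also have "\<dots> = (\<Sum>k<n. c * q ^ j * L0 * \<bar>t\<bar> ^ (m - n) * (fact (m - n) / fact (m - k)))"
      proof (rule sum.cong[OF refl])
        fix k assume "k \<in> {..<n}"
        then have "m - k = (m - n) + (n - k)" using nm by simp
        then have "\<bar>t\<bar> ^ (m - k) = \<bar>t\<bar> ^ (m - n) * \<bar>t\<bar> ^ (n - k)" by (simp add: power_add)
        then show "(c / \<bar>t\<bar> ^ (n - k)) * (q ^ j * L0 * \<bar>t\<bar> ^ (m - k) * (fact (m - n) / fact (m - k))) =
            c * q ^ j * L0 * \<bar>t\<bar> ^ (m - n) * (fact (m - n) / fact (m - k))"
          using t by (simp add: field_simps)
      qed
      also have "\<dots> = (c * q ^ j * L0 * \<bar>t\<bar> ^ (m - n)) * S"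
        unfolding S_def by (simp add: sum_distrib_left)
      also have "\<dots> = q ^ Suc j * L0 * \<bar>t\<bar> ^ (m - n)"
      proof -
        have "q ^ Suc j * L0 * \<bar>t\<bar> ^ (m - n) = (c * S) * q ^ j * L0 * \<bar>t\<bar> ^ (m - n)"
          unfolding q_def[symmetric] by simp
        then show ?thesis by (simp add: mult_ac) (metis mult.commute)
      qed
      finally show "norm (D n t) \<le> q ^ Suc j * L0 * \<bar>t\<bar> ^ (m - n)" .
    qed
  qed
  have Dn0: "D n t = 0" if t: "0 < \<bar>t\<bar>" "\<bar>t\<bar> \<le> r" for t
  proof -
    have "(\<lambda>j. q ^ j * (L0 * \<bar>t\<bar> ^ (m - n))) \<longlonglongrightarrow> 0 * (L0 * \<bar>t\<bar> ^ (m - n))"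
      by (intro tendsto_mult tendsto_const LIMSEQ_power_zero) (use q0 q1 in auto)
    moreover have "\<forall>\<^sub>F j in sequentially. norm (D n t) \<le> q ^ j * (L0 * \<bar>t\<bar> ^ (m - n))"
      using step t by (intro always_eventually allI) (simp add: mult.assoc)
    ultimately have "norm (D n t) \<le> 0 * (L0 * \<bar>t\<bar> ^ (m - n))"
      by (intro tendsto_le[OF trivial_limit_sequentially _ tendsto_const])
    then have "norm (D n t) \<le> 0" by simp
    then show ?thesis by simp
  qed
  have f0: "f t = 0" if t: "\<bar>t\<bar> \<le> r" for t
  proof (cases "t = 0")
    case True
    then show ?thesis using D0[of 0] Dz[of 0] nm n a by auto
  next
    case False
    have "norm (D (n - n) t) \<le> 0 * \<bar>t\<bar> ^ (0 + n) * fact 0 / fact (0 + n)"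
      by (rule iter_bound[where r = r and D = D and p = n and j = n and e = 0 and K = 0, OF deriv _ _ _ _ t]) (use Dn0 Dz nm False t in auto)
    then show ?thesis using D0[of t] t r by (auto simp: abs_le_iff)
  qed
  show ?thesis using r f0 by (intro exI[of _ r]) auto
qed

end
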